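(* Let $k\ge 0$. For every $k$-essential multicontext $C$ there is a $k$-correct multicontext $C'$ equivalent to $C$.
   Context: Let $\Sigma$ be a finite alphabet, $1\notin\Sigma$ a separator, $\Sigma_1=\Sigma\cup\{1\}$, $\mathrm{rk}(w)=|w|_1$ for $w\in\Sigma_1^*$; for $\mathrm{rk}(u)\ge j$, $u\odot_j v$ replaces the $j$-th occurrence of $1$ in $u$ by $v$; these operations extend elementwise to sets of words. Let $N$ be a set of nonterminals, each with a rank in $\mathbb{N}$, and let there be countably many variables of each rank. Multicontexts (with ranks) are built from nonterminals and variables (their rank), words of $\Sigma^*$ (rank $0$) and $1$ (rank $1$) by $(\alpha\cdot\beta)$ of rank $\mathrm{rk}\alpha+\mathrm{rk}\beta$ and $(\alpha\odot_j\beta)$, $j\ge1$, allowed when $\mathrm{rk}\alpha\ge j$, of rank $\mathrm{rk}\alpha+\mathrm{rk}\beta-1$. Submulticontexts are the subterms (nodes of the syntactic tree). A multicontext is $k$-correct if every submulticontext has rank at most $k$; it is $k$-essential if its own rank and the ranks of all variables and nonterminals occurring in it are less than $k$. A multicontext is ground if it contains no nonterminals. Two ground multicontexts with variables $x_1,\dots,x_t$ are equivalent if for every valuation $\mu$ assigning to each variable of rank $r$ a set of words of $\Sigma_1^*$ of rank $r$, their values (interpreting $\cdot$ as concatenation and $\odot_j$ as intercalation, elementwise on sets) coincide. Two arbitrary multicontexts $\alpha_1,\alpha_2$ are equivalent if $\alpha_1=D_1[A_1,\dots,A_s]$ and $\alpha_2=D_2[A_1,\dots,A_s]$ for some nonterminals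 $A_1,\dots,A_s$ and some equivalent ground multicontexts $D_1,D_2$ (where $D[A_1,\dots,A_s]$ means substituting $A_i$ for the $i$-th of $s$ fresh variables). *)

theory Defs
  imports Main
begin

text \<open>Letters of Sigma_1 = Sigma plus the separator 1 (here Sep).\<close>
datatype 'a sym = Letter 'a | Sep

definition rk_word :: "'a sym list \<Rightarrow> nat" where
  "rk_word w = length (filter (\<lambda>c. c = Sep) w)"

text \<open>u odot_j v: replace the j-th occurrence of Sep in u by v (j counted from 1).\<close>
fun intercal :: "nat \<Rightarrow> 'a sym list \<Rightarrow> 'a sym list \<Rightarrow> 'a sym list" where
  "intercal j [] v = []"
| "intercal j (Sep # u) v = (if j = 1 then v @ u else Sep # intercal (j - 1) u v)"
| "intercal j (Letter a # u) v = Letter a # intercal j u v"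

text \<open>Multicontexts. A variable is Var r i: the i-th variable of rank r.
  Nonterminals have type 'n, their ranks are given by a function rho.\<close>
datatype ('a, 'n) mc =
    NT 'n
  | Var nat nat
  | Word "'a list"
  | One
  | Cat "('a, 'n) mc" "('a, 'n) mc"
  | Ins nat "('a, 'n) mc" "('a, 'n) mc"

fun rk :: "('n \<Rightarrow> nat) \<Rightarrow> ('a, 'n) mc \<Rightarrow> nat" where
  "rk \<rho> (NT A) = \<rho> A"
| "rk \<rho> (Var r i) = r"
| "rk \<rho> (Word w) = 0"
| "rk \<rho> One = 1"
| "rk \<rho> (Cat a b) = rk \<rho> a + rk \<rho> b"
| "rk \<rho> (Ins j a b) = rk \<rho> a + rk \<rho> b - 1"

fun wf_mc :: "('n \<Rightarrow> nat) \<Rightarrow> ('a, 'n) mc \<Rightarrow> bool" where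
  "wf_mc \<rho> (Cat a b) = (wf_mc \<rho> a \<and> wf_mc \<rho> b)"
| "wf_mc \<rho> (Ins j a b) = (1 \<le> j \<and> j \<le> rk \<rho> a \<and> wf_mc \<rho> a \<and> wf_mc \<rho> b)"
| "wf_mc \<rho> _ = True"

fun subterms :: "('a, 'n) mc \<Rightarrow> ('a, 'n) mc set" where
  "subterms (Cat a b) = insert (Cat a b) (subterms a \<union> subterms b)"
| "subterms (Ins j a b) = insert (Ins j a b) (subterms a \<union> subterms b)"
| "subterms c = {c}"

fun vars :: "('a, 'n) mc \<Rightarrow> (nat \<times> nat) set" where
  "vars (Var r i) = {(r, i)}"
| "vars (Cat a b) = vars a \<union> vars b"
| "vars (Ins j a b) = vars a \<union> vars b"
| "vars _ = {}"

fun nts :: "('a, 'n) mc \<Rightarrow> 'n set" where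
  "nts (NT A) = {A}"
| "nts (Cat a b) = nts a \<union> nts b"
| "nts (Ins j a b) = nts a \<union> nts b"
| "nts _ = {}"

definition k_correct :: "('n \<Rightarrow> nat) \<Rightarrow> nat \<Rightarrow> ('a, 'n) mc \<Rightarrow> bool" where
  "k_correct \<rho> k C \<longleftrightarrow> wf_mc \<rho> C \<and> (\<forall>D \<in> subterms C. rk \<rho> D \<le> k)"

definition k_essential :: "('n \<Rightarrow> nat) \<Rightarrow> nat \<Rightarrow> ('a, 'n) mc \<Rightarrow> bool" where
  "k_essential \<rho> k C \<longleftrightarrow> wf_mc \<rho> C \<and> rk \<rho> C < k
     \<and> (\<forall>v \<in> vars C. fst v < k) \<and> (\<forall>A \<in> nts C. \<rho> A < k)"

definition ground :: "('a, 'n) mc \<Rightarrow> bool" where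
  "ground C \<longleftrightarrow> nts C = {}"

definition valuation :: "(nat \<Rightarrow> nat \<Rightarrow> 'a sym list set) \<Rightarrow> bool" where
  "valuation \<mu> \<longleftrightarrow> (\<forall>r i. \<forall>w \<in> \<mu> r i. rk_word w = r)"

fun eval :: "(nat \<Rightarrow> nat \<Rightarrow> 'a sym list set) \<Rightarrow> ('a, 'n) mc \<Rightarrow> 'a sym list set" where
  "eval \<mu> (NT A) = {}"
| "eval \<mu> (Var r i) = \<mu> r i"
| "eval \<mu> (Word w) = {map Letter w}"
| "eval \<mu> One = {[Sep]}"
| "eval \<mu> (Cat a b) = {u @ v | u v. u \<in> eval \<mu> a \<and> v \<in> eval \<mu> b}"
| "eval \<mu> (Ins j a b) = {intercal j u v | u v. u \<in> eval \<mu> a \<and> v \<in> eval \<mu> b}"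

definition ground_equiv :: "('n \<Rightarrow> nat) \<Rightarrow> ('a, 'n) mc \<Rightarrow> ('a, 'n) mc \<Rightarrow> bool" where
  "ground_equiv \<rho> D1 D2 \<longleftrightarrow> wf_mc \<rho> D1 \<and> wf_mc \<rho> D2 \<and> ground D1 \<and> ground D2
     \<and> (\<forall>\<mu>. valuation \<mu> \<longrightarrow> eval \<mu> D1 = eval \<mu> D2)"

fun subst :: "(nat \<times> nat \<Rightarrow> 'n option) \<Rightarrow> ('a, 'n) mc \<Rightarrow> ('a, 'n) mc" where
  "subst \<sigma> (Var r i) = (case \<sigma> (r, i) of Some A \<Rightarrow> NT A | None \<Rightarrow> Var r i)"
| "subst \<sigma> (Cat a b) = Cat (subst \<sigma> a) (subst \<sigma> b)"
| "subst \<sigma> (Ins j a b) = Ins j (subst \<sigma> a) (subst \<sigma> b)"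
| "subst \<sigma> c = c"

definition mc_equiv :: "('n \<Rightarrow> nat) \<Rightarrow> ('a, 'n) mc \<Rightarrow> ('a, 'n) mc \<Rightarrow> bool" where
  "mc_equiv \<rho> C1 C2 \<longleftrightarrow> (\<exists>\<sigma> D1 D2.
      (\<forall>v A. \<sigma> v = Some A \<longrightarrow> \<rho> A = fst v)
    \<and> ground_equiv \<rho> D1 D2 \<and> C1 = subst \<sigma> D1 \<and> C2 = subst \<sigma> D2)"

end

theory Submission
  imports Defs
begin

lemma rkw_simps[simp]:
  "rk_word [] = 0" "rk_word (Sep # u) = Suc (rk_word u)" "rk_word (Letter a # u) = rk_word u"
  "rk_word (u @ v) = rk_word u + rk_word v"
  by (auto simp: rk_word_def)

lemma rkw_map_Letter[simp]: "rk_word (map Letter w) = 0"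
  by (induct w) auto

lemma intercal_append:
  "1 \<le> j \<Longrightarrow> intercal j (u @ w) v = (if j \<le> rk_word u then intercal j u v @ w else u @ intercal (j - rk_word u) w v)"
proof (induct u arbitrary: j)
  case Nil then show ?case by simp
next
  case (Cons c u)
  show ?case
  proof (cases c)
    case (Letter a) with Cons show ?thesis by auto
  next
    case Sep with Cons show ?thesis by (auto simp: Suc_diff_le)
  qed
qed

lemma rk_intercal:
  "1 \<le> j \<Longrightarrow> j \<le> rk_word u \<Longrightarrow> rk_word (intercal j u v) = rk_word u + rk_word v - 1"
proof (induct u arbitrary: j)
  case Nil then show ?case by simp
next
  case (Cons c u)
  show ?case
  proof (cases c)
    case (Letter a) with Cons show ?thesis by auto
  next
    case Sep with Cons show ?thesis by auto
  qed
qed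

fun fillo :: "'a sym list \<Rightarrow> 'a sym list option list \<Rightarrow> 'a sym list" where
  "fillo [] os = []"
| "fillo (Letter a # u) os = Letter a # fillo u os"
| "fillo (Sep # u) [] = Sep # fillo u []"
| "fillo (Sep # u) (None # os) = Sep # fillo u os"
| "fillo (Sep # u) (Some v # os) = v @ fillo u os"

fun cw :: "'a sym list option \<Rightarrow> nat" where
  "cw None = 1" | "cw (Some w) = rk_word w"

definition cnt :: "'a sym list option list \<Rightarrow> nat" where
  "cnt os = sum_list (map cw os)"

lemma cnt_simps[simp]: "cnt [] = 0" "cnt (o1 # os) = cw o1 + cnt os"
  by (auto simp: cnt_def)

fun inso :: "nat \<Rightarrow> 'a sym list option list \<Rightarrow> 'a sym list \<Rightarrow> 'a sym list option list" where
  "inso j [] v = []"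
| "inso j (None # os) v = (if j = 1 then Some v # os else None # inso (j - 1) os v)"
| "inso j (Some x # os) v = (if j \<le> rk_word x then Some (intercal j x v) # os else Some x # inso (j - rk_word x) os v)"

lemma fillo_nil[simp]: "fillo u [] = u"
proof (induct u)
  case (Cons c u) then show ?case by (cases c) auto
qed simp

lemma rk_fillo: "length os = rk_word u \<Longrightarrow> rk_word (fillo u os) = cnt os"
proof (induct u arbitrary: os)
  case (Cons c u)
  show ?case
  proof (cases c)
    case (Letter a) with Cons show ?thesis by auto
  next
    case Sep
    with Cons obtain o1 os' where os: "os = o1 # os'" by (cases os) auto
    with Cons Sep show ?thesis by (cases o1) auto
  qed
qed simp

lemma intercal_fillo:
  "length os = rk_word u \<Longrightarrow> 1 \<le> j \<Longrightarrow> intercal j (fillo u os) v = fillo u (inso j os v)"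
proof (induct u arbitrary: os j)
  case (Cons c u)
  show ?case
  proof (cases c)
    case (Letter a) with Cons show ?thesis by auto
  next
    case Sep
    with Cons obtain o1 os' where os: "os = o1 # os'" by (cases os) auto
    show ?thesis
    proof (cases o1)
      case None with Cons Sep os show ?thesis by auto
    next
      case (Some x)
      with Cons Sep os show ?thesis
        by (auto simp: intercal_append rk_fillo)
    qed
  qed
qed simp

lemma inso_upd:
  "g < length os \<Longrightarrow> os ! g = None \<Longrightarrow> inso (Suc (cnt (take g os))) os v = os[g := Some v]"
proof (induct os arbitrary: g)
  case Nil then show ?case by simp
next
  case (Cons o1 os)
  show ?case
  proof (cases g)
    case 0 with Cons show ?thesis by simp
  next
    case (Suc g')
    with Cons show ?thesis by (cases o1) auto
  qed
qed

lemma fillo_none: "n = rk_word u \<Longrightarrow> fillo u (replicate n None) = u"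
proof (induct u arbitrary: n)
  case (Cons c u) then show ?case by (cases c) auto
qed simp

lemma fillo_sep: "n = rk_word u \<Longrightarrow> fillo u (replicate n (Some [Sep])) = u"
proof (induct u arbitrary: n)
  case (Cons c u) then show ?case by (cases c) auto
qed simp

datatype 'a it = IW "'a list" | IS | IV nat nat "'a it list list"

primrec rki :: "'a it \<Rightarrow> nat" and rks :: "'a it list \<Rightarrow> nat" and rkg :: "'a it list list \<Rightarrow> nat" where
  "rki (IW w) = 0" | "rki IS = 1" | "rki (IV r i gs) = rkg gs"
| "rks [] = 0" | "rks (x#s) = rki x + rks s"
| "rkg [] = 0" | "rkg (s#gs) = rks s + rkg gs"

primrec wfi :: "nat \<Rightarrow> 'a it \<Rightarrow> bool" and wfs :: "nat \<Rightarrow> 'a it list \<Rightarrow> bool"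
  and wfg :: "nat \<Rightarrow> 'a it list list \<Rightarrow> bool" where
  "wfi k (IW w) = True" | "wfi k IS = True" | "wfi k (IV r i gs) = (length gs = r \<and> r \<le> k \<and> wfg k gs)"
| "wfs k [] = True" | "wfs k (x#s) = (wfi k x \<and> wfs k s)"
| "wfg k [] = True" | "wfg k (s#gs) = (wfs k s \<and> wfg k gs)"

primrec evi :: "(nat \<Rightarrow> nat \<Rightarrow> 'a sym list set) \<Rightarrow> 'a it \<Rightarrow> 'a sym list set"
  and evs :: "(nat \<Rightarrow> nat \<Rightarrow> 'a sym list set) \<Rightarrow> 'a it list \<Rightarrow> 'a sym list set"
  and evg :: "(nat \<Rightarrow> nat \<Rightarrow> 'a sym list set) \<Rightarrow> 'a it list list \<Rightarrow> 'a sym list list set" where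
  "evi \<mu> (IW w) = {map Letter w}" | "evi \<mu> IS = {[Sep]}"
| "evi \<mu> (IV r i gs) = {fillo u (map Some vs) | u vs. u \<in> \<mu> r i \<and> vs \<in> evg \<mu> gs}"
| "evs \<mu> [] = {[]}" | "evs \<mu> (x#s) = {u @ v | u v. u \<in> evi \<mu> x \<and> v \<in> evs \<mu> s}"
| "evg \<mu> [] = {[]}" | "evg \<mu> (s#gs) = {v # vs | v vs. v \<in> evs \<mu> s \<and> vs \<in> evg \<mu> gs}"

function insi :: "nat \<Rightarrow> 'a it \<Rightarrow> 'a it list \<Rightarrow> 'a it list"
  and inss :: "nat \<Rightarrow> 'a it list \<Rightarrow> 'a it list \<Rightarrow> 'a it list"
  and insg :: "nat \<Rightarrow> 'a it list list \<Rightarrow> 'a it list \<Rightarrow> 'a it list list" where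
  "insi j (IW w) t = [IW w]" | "insi j IS t = t" | "insi j (IV r i gs) t = [IV r i (insg j gs t)]"
| "inss j [] t = []"
| "inss j (x#s) t = (if j \<le> rki x then insi j x t @ s else x # inss (j - rki x) s t)"
| "insg j [] t = []"
| "insg j (g#gs) t = (if j \<le> rks g then inss j g t # gs else g # insg (j - rks g) gs t)"
  by pat_completeness auto
termination
  by (relation "measure (\<lambda>x. case x of Inl (j, x, t) \<Rightarrow> size x | Inr (Inl (j, s, t)) \<Rightarrow> size_list size s
      | Inr (Inr (j, gs, t)) \<Rightarrow> size_list (size_list size) gs)") auto

fun insv :: "nat \<Rightarrow> 'a sym list list \<Rightarrow> 'a sym list \<Rightarrow> 'a sym list list" where
  "insv j [] v = []"
| "insv j (x # xs) v = (if j \<le> rk_word x then intercal j x v # xs else x # insv (j - rk_word x) xs v)"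

lemma inso_map_Some: "inso j (map Some vs) v = map Some (insv j vs v)"
  by (induct vs arbitrary: j) auto

lemma cnt_map_Some: "cnt (map Some vs) = sum_list (map rk_word vs)"
  by (induct vs) auto

lemma rks_append[simp]: "rks (s @ t) = rks s + rks t"
  by (induct s) auto
lemma wfs_append[simp]: "wfs k (s @ t) = (wfs k s \<and> wfs k t)"
  by (induct s) auto
lemma evs_append: "evs \<mu> (s @ t) = {u @ v | u v. u \<in> evs \<mu> s \<and> v \<in> evs \<mu> t}"
proof (induct s)
  case Nil then show ?case by simp
next
  case (Cons x s)
  show ?case
  proof (rule set_eqI, rule iffI)
    fix w assume "w \<in> evs \<mu> ((x # s) @ t)"
    then obtain a b c where "w = a @ b @ c" "a \<in> evi \<mu> x" "b \<in> evs \<mu> s" "c \<in> evs \<mu> t"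
      by (auto simp: Cons)
    moreover have "a @ b \<in> evs \<mu> (x # s)" using \<open>a \<in> evi \<mu> x\<close> \<open>b \<in> evs \<mu> s\<close> by auto
    ultimately show "w \<in> {u @ v | u v. u \<in> evs \<mu> (x # s) \<and> v \<in> evs \<mu> t}"
      by (metis (mono_tags, lifting) append_assoc mem_Collect_eq)
  next
    fix w assume "w \<in> {u @ v | u v. u \<in> evs \<mu> (x # s) \<and> v \<in> evs \<mu> t}"
    then obtain a b c where "w = a @ b @ c" "a \<in> evi \<mu> x" "b \<in> evs \<mu> s" "c \<in> evs \<mu> t"
      by auto
    then show "w \<in> evs \<mu> ((x # s) @ t)"
      by (auto simp: Cons)
  qed
qed

lemma evg_len: "vs \<in> evg \<mu> gs \<Longrightarrow> length vs = length gs"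
  by (induct gs arbitrary: vs) auto

lemma evg_char: "evg \<mu> gs = {vs. length vs = length gs \<and> (\<forall>h < length gs. vs ! h \<in> evs \<mu> (gs ! h))}"
proof (induct gs)
  case Nil then show ?case by simp
next
  case (Cons g gs)
  show ?case
  proof (rule set_eqI, rule iffI)
    fix vs assume "vs \<in> evg \<mu> (g # gs)"
    then obtain v vs' where vs: "vs = v # vs'" "v \<in> evs \<mu> g" "vs' \<in> evg \<mu> gs" by auto
    then have "length vs' = length gs \<and> (\<forall>h < length gs. vs' ! h \<in> evs \<mu> (gs ! h))" using Cons by blast
    then show "vs \<in> {vs. length vs = length (g#gs) \<and> (\<forall>h < length (g#gs). vs ! h \<in> evs \<mu> ((g#gs) ! h))}"
      using vs by (auto simp: less_Suc_eq_0_disj)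
  next
    fix vs assume a: "vs \<in> {vs. length vs = length (g#gs) \<and> (\<forall>h < length (g#gs). vs ! h \<in> evs \<mu> ((g#gs) ! h))}"
    then obtain v vs' where vs: "vs = v # vs'" by (cases vs) auto
    from a vs have "v \<in> evs \<mu> g" by force
    moreover from a vs have "vs' \<in> evg \<mu> gs" unfolding Cons by force
    ultimately show "vs \<in> evg \<mu> (g # gs)" using vs by simp
  qed
qed

lemma rk_evs_gen: "(\<forall>y\<in>set s. \<forall>w\<in>evi \<mu> y. wfi k y \<longrightarrow> rk_word w = rki y) \<Longrightarrow> wfs k s \<Longrightarrow> w \<in> evs \<mu> s \<Longrightarrow> rk_word w = rks s"
  by (induct s arbitrary: w) auto

lemma rk_evg_gen: "(\<forall>g\<in>set gs. \<forall>w\<in>evs \<mu> g. wfs k g \<longrightarrow> rk_word w = rks g) \<Longrightarrow> wfg k gs \<Longrightarrow> vs \<in> evg \<mu> gs \<Longrightarrow> sum_list (map rk_word vs) = rkg gs"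
  by (induct gs arbitrary: vs) auto

lemma rk_evi: "valuation \<mu> \<Longrightarrow> wfi k x \<Longrightarrow> w \<in> evi \<mu> x \<Longrightarrow> rk_word w = rki x"
proof (induct x arbitrary: w)
  case (IV r i gs)
  then obtain u vs where w: "w = fillo u (map Some vs)" "u \<in> \<mu> r i" "vs \<in> evg \<mu> gs" by auto
  have ru: "rk_word u = r" using IV(2) w(2) unfolding valuation_def by blast
  have lv: "length vs = r" using evg_len[OF w(3)] IV(3) by simp
  have "\<forall>g\<in>set gs. \<forall>w\<in>evs \<mu> g. wfs k g \<longrightarrow> rk_word w = rks g"
    using IV(1) IV(2) by (intro ballI impI rk_evs_gen) blast+
  then have "sum_list (map rk_word vs) = rkg gs" using IV(3) w(3) by (intro rk_evg_gen) auto
  then show ?case using w ru lv by (simp add: rk_fillo cnt_map_Some)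
qed auto

lemma rk_evs: "valuation \<mu> \<Longrightarrow> wfs k s \<Longrightarrow> w \<in> evs \<mu> s \<Longrightarrow> rk_word w = rks s"
  using rk_evi by (intro rk_evs_gen) blast+

lemma rk_evg: "valuation \<mu> \<Longrightarrow> wfg k gs \<Longrightarrow> vs \<in> evg \<mu> gs \<Longrightarrow> sum_list (map rk_word vs) = rkg gs"
  using rk_evs by (intro rk_evg_gen) blast+

lemma ins_len: "length (insg j gs t) = length gs"
  by (induct gs arbitrary: j) auto

lemma ins_wf:
  "wfs k t \<Longrightarrow> wfi k x \<Longrightarrow> wfs k (insi j x t)"
  "wfs k t \<Longrightarrow> wfs k s \<Longrightarrow> wfs k (inss j s t)"
  "wfs k t \<Longrightarrow> wfg k gs \<Longrightarrow> wfg k (insg j gs t)"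
  by (induct j x t and j s t and j gs t rule: insi_inss_insg.induct) (auto simp: ins_len)

lemma ins_rk:
  "1 \<le> j \<Longrightarrow> j \<le> rki x \<Longrightarrow> rks (insi j x t) = rki x + rks t - 1"
  "1 \<le> j \<Longrightarrow> j \<le> rks s \<Longrightarrow> rks (inss j s t) = rks s + rks t - 1"
  "1 \<le> j \<Longrightarrow> j \<le> rkg gs \<Longrightarrow> rkg (insg j gs t) = rkg gs + rks t - 1"
  by (induct j x t and j s t and j gs t rule: insi_inss_insg.induct) auto

lemma insv_cong: "length vs = length xs \<Longrightarrow> insv j vs v = insv j vs v" by simp

lemma ins_sem:
  "valuation \<mu> \<Longrightarrow> wfs k t \<Longrightarrow> wfi k x \<Longrightarrow> 1 \<le> j \<Longrightarrow> j \<le> rki x \<Longrightarrow>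
     evs \<mu> (insi j x t) = {intercal j u v |u v. u \<in> evi \<mu> x \<and> v \<in> evs \<mu> t}"
  "valuation \<mu> \<Longrightarrow> wfs k t \<Longrightarrow> wfs k s \<Longrightarrow> 1 \<le> j \<Longrightarrow> j \<le> rks s \<Longrightarrow>
     evs \<mu> (inss j s t) = {intercal j u v |u v. u \<in> evs \<mu> s \<and> v \<in> evs \<mu> t}"
  "valuation \<mu> \<Longrightarrow> wfs k t \<Longrightarrow> wfg k gs \<Longrightarrow> 1 \<le> j \<Longrightarrow> j \<le> rkg gs \<Longrightarrow>
     evg \<mu> (insg j gs t) = {insv j vs v |vs v. vs \<in> evg \<mu> gs \<and> v \<in> evs \<mu> t}"
proof (induct j x t and j s t and j gs t rule: insi_inss_insg.induct)
  case (1 j w t) then show ?case by simp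
next
  case (2 j t)
  then have j: "j = 1" by simp
  show ?case
  proof (rule set_eqI, rule iffI)
    fix z assume "z \<in> evs \<mu> (insi j IS t)"
    then show "z \<in> {intercal j u v |u v. u \<in> evi \<mu> IS \<and> v \<in> evs \<mu> t}"
      using j by auto
  next
    fix z assume "z \<in> {intercal j u v |u v. u \<in> evi \<mu> IS \<and> v \<in> evs \<mu> t}"
    then show "z \<in> evs \<mu> (insi j IS t)" using j by auto
  qed
next
  case (3 j r i gs t)
  have IH: "evg \<mu> (insg j gs t) = {insv j vs v |vs v. vs \<in> evg \<mu> gs \<and> v \<in> evs \<mu> t}"
    using 3 by simp
  have key: "\<And>u vs v. u \<in> \<mu> r i \<Longrightarrow> vs \<in> evg \<mu> gs \<Longrightarrow>
      intercal j (fillo u (map Some vs)) v = fillo u (map Some (insv j vs v))"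
  proof -
    fix u vs v assume u: "u \<in> \<mu> r i" and vs: "vs \<in> evg \<mu> gs"
    have "rk_word u = r" using "3.prems"(1) u unfolding valuation_def by blast
    moreover have "length vs = r" using evg_len[OF vs] "3.prems"(3) by simp
    ultimately show "intercal j (fillo u (map Some vs)) v = fillo u (map Some (insv j vs v))"
      using "3.prems"(4) by (simp add: intercal_fillo inso_map_Some)
  qed
  show ?case
  proof (rule set_eqI, rule iffI)
    fix z assume "z \<in> evs \<mu> (insi j (IV r i gs) t)"
    then obtain u vs' where z: "z = fillo u (map Some vs')" "u \<in> \<mu> r i" "vs' \<in> evg \<mu> (insg j gs t)" by auto
    then obtain vs v where vs': "vs' = insv j vs v" "vs \<in> evg \<mu> gs" "v \<in> evs \<mu> t" using IH by auto
    have "fillo u (map Some vs) \<in> evi \<mu> (IV r i gs)" using z vs' by auto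
    moreover have "z = intercal j (fillo u (map Some vs)) v" using key[OF z(2) vs'(2), of v] z vs' by simp
    ultimately show "z \<in> {intercal j u v |u v. u \<in> evi \<mu> (IV r i gs) \<and> v \<in> evs \<mu> t}"
      using vs' by blast
  next
    fix z assume "z \<in> {intercal j u v |u v. u \<in> evi \<mu> (IV r i gs) \<and> v \<in> evs \<mu> t}"
    then obtain u vs v where z: "z = intercal j (fillo u (map Some vs)) v" "u \<in> \<mu> r i" "vs \<in> evg \<mu> gs" "v \<in> evs \<mu> t"
      by auto
    have "insv j vs v \<in> evg \<mu> (insg j gs t)" using IH z by auto
    then show "z \<in> evs \<mu> (insi j (IV r i gs) t)"
      using key[OF z(2) z(3), of v] z by auto
  qed
next
  case (4 j t) then show ?case by simp
next
  case (5 j x s t)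
  show ?case
  proof (cases "j \<le> rki x")
    case True
    then have IH: "evs \<mu> (insi j x t) = {intercal j u v |u v. u \<in> evi \<mu> x \<and> v \<in> evs \<mu> t}"
      using 5 by simp
    have eq: "\<And>u b v. u \<in> evi \<mu> x \<Longrightarrow> intercal j (u @ b) v = intercal j u v @ b"
    proof -
      fix u b v assume u: "u \<in> evi \<mu> x"
      have "rk_word u = rki x" using rk_evi[OF "5.prems"(1) _ u] "5.prems"(3) by auto
      then show "intercal j (u @ b) v = intercal j u v @ b" using True "5.prems"(4) by (simp add: intercal_append)
    qed
    show ?thesis
    proof (rule set_eqI, rule iffI)
      fix z assume "z \<in> evs \<mu> (inss j (x # s) t)"
      then obtain a b where z: "z = a @ b" "a \<in> evs \<mu> (insi j x t)" "b \<in> evs \<mu> s"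
        using True by (auto simp: evs_append)
      then obtain u v where a: "a = intercal j u v" "u \<in> evi \<mu> x" "v \<in> evs \<mu> t" using IH by auto
      have "u @ b \<in> evs \<mu> (x # s)" using a z by auto
      moreover have "z = intercal j (u @ b) v" using eq[OF a(2), of b v] a z by simp
      ultimately show "z \<in> {intercal j u v |u v. u \<in> evs \<mu> (x # s) \<and> v \<in> evs \<mu> t}"
        using a by blast
    next
      fix z assume "z \<in> {intercal j u v |u v. u \<in> evs \<mu> (x # s) \<and> v \<in> evs \<mu> t}"
      then obtain u b v where z: "z = intercal j (u @ b) v" "u \<in> evi \<mu> x" "b \<in> evs \<mu> s" "v \<in> evs \<mu> t"
        by auto
      have "intercal j u v \<in> evs \<mu> (insi j x t)" using IH z by auto
      then show "z \<in> evs \<mu> (inss j (x # s) t)"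
        using True eq[OF z(2), of b v] z by (auto simp: evs_append)
    qed
  next
    case False
    then have IH: "evs \<mu> (inss (j - rki x) s t) = {intercal (j - rki x) u v |u v. u \<in> evs \<mu> s \<and> v \<in> evs \<mu> t}"
      using 5 by simp
    have eq: "\<And>u b v. u \<in> evi \<mu> x \<Longrightarrow> intercal j (u @ b) v = u @ intercal (j - rki x) b v"
    proof -
      fix u b v assume u: "u \<in> evi \<mu> x"
      have "rk_word u = rki x" using rk_evi[OF "5.prems"(1) _ u] "5.prems"(3) by auto
      then show "intercal j (u @ b) v = u @ intercal (j - rki x) b v" using False "5.prems"(4) by (simp add: intercal_append)
    qed
    show ?thesis
    proof (rule set_eqI, rule iffI)
      fix z assume "z \<in> evs \<mu> (inss j (x # s) t)"
      then obtain a b where z: "z = a @ b" "a \<in> evi \<mu> x" "b \<in> evs \<mu> (inss (j - rki x) s t)"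
        using False by auto
      then obtain u v where b: "b = intercal (j - rki x) u v" "u \<in> evs \<mu> s" "v \<in> evs \<mu> t" using IH by auto
      have "a @ u \<in> evs \<mu> (x # s)" using b z by auto
      moreover have "z = intercal j (a @ u) v" using eq[OF z(2), of u v] b z by simp
      ultimately show "z \<in> {intercal j u v |u v. u \<in> evs \<mu> (x # s) \<and> v \<in> evs \<mu> t}"
        using b by blast
    next
      fix z assume "z \<in> {intercal j u v |u v. u \<in> evs \<mu> (x # s) \<and> v \<in> evs \<mu> t}"
      then obtain u b v where z: "z = intercal j (u @ b) v" "u \<in> evi \<mu> x" "b \<in> evs \<mu> s" "v \<in> evs \<mu> t"
        by auto
      have "intercal (j - rki x) b v \<in> evs \<mu> (inss (j - rki x) s t)" using IH z by auto
      then show "z \<in> evs \<mu> (inss j (x # s) t)"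
        using False eq[OF z(2), of b v] z by auto
    qed
  qed
next
  case (6 j t) then show ?case by simp
next
  case (7 j g gs t)
  show ?case
  proof (cases "j \<le> rks g")
    case True
    then have IH: "evs \<mu> (inss j g t) = {intercal j u v |u v. u \<in> evs \<mu> g \<and> v \<in> evs \<mu> t}"
      using 7 by simp
    have eq: "\<And>u vs v. u \<in> evs \<mu> g \<Longrightarrow> insv j (u # vs) v = intercal j u v # vs"
    proof -
      fix u vs v assume u: "u \<in> evs \<mu> g"
      have "rk_word u = rks g" using rk_evs[OF "7.prems"(1) _ u] "7.prems"(3) by auto
      then show "insv j (u # vs) v = intercal j u v # vs" using True by simp
    qed
    show ?thesis
    proof (rule set_eqI, rule iffI)
      fix z assume "z \<in> evg \<mu> (insg j (g # gs) t)"
      then obtain a b where z: "z = a # b" "a \<in> evs \<mu> (inss j g t)" "b \<in> evg \<mu> gs"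
        using True by auto
      then obtain u v where a: "a = intercal j u v" "u \<in> evs \<mu> g" "v \<in> evs \<mu> t" using IH by auto
      have "u # b \<in> evg \<mu> (g # gs)" using a z by auto
      moreover have "z = insv j (u # b) v" using eq[OF a(2), of b v] a z by simp
      ultimately show "z \<in> {insv j vs v |vs v. vs \<in> evg \<mu> (g # gs) \<and> v \<in> evs \<mu> t}"
        using a by blast
    next
      fix z assume "z \<in> {insv j vs v |vs v. vs \<in> evg \<mu> (g # gs) \<and> v \<in> evs \<mu> t}"
      then obtain u b v where z: "z = insv j (u # b) v" "u \<in> evs \<mu> g" "b \<in> evg \<mu> gs" "v \<in> evs \<mu> t"
        by auto
      have "intercal j u v \<in> evs \<mu> (inss j g t)" using IH z by auto
      then show "z \<in> evg \<mu> (insg j (g # gs) t)"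
        using True eq[OF z(2), of b v] z by auto
    qed
  next
    case False
    then have IH: "evg \<mu> (insg (j - rks g) gs t) = {insv (j - rks g) vs v |vs v. vs \<in> evg \<mu> gs \<and> v \<in> evs \<mu> t}"
      using 7 by simp
    have eq: "\<And>u vs v. u \<in> evs \<mu> g \<Longrightarrow> insv j (u # vs) v = u # insv (j - rks g) vs v"
    proof -
      fix u vs v assume u: "u \<in> evs \<mu> g"
      have "rk_word u = rks g" using rk_evs[OF "7.prems"(1) _ u] "7.prems"(3) by auto
      then show "insv j (u # vs) v = u # insv (j - rks g) vs v" using False by simp
    qed
    show ?thesis
    proof (rule set_eqI, rule iffI)
      fix z assume "z \<in> evg \<mu> (insg j (g # gs) t)"
      then obtain a b where z: "z = a # b" "a \<in> evs \<mu> g" "b \<in> evg \<mu> (insg (j - rks g) gs t)"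
        using False by auto
      then obtain u v where b: "b = insv (j - rks g) u v" "u \<in> evg \<mu> gs" "v \<in> evs \<mu> t" using IH by auto
      have "a # u \<in> evg \<mu> (g # gs)" using b z by auto
      moreover have "z = insv j (a # u) v" using eq[OF z(2), of u v] b z by simp
      ultimately show "z \<in> {insv j vs v |vs v. vs \<in> evg \<mu> (g # gs) \<and> v \<in> evs \<mu> t}"
        using b by blast
    next
      fix z assume "z \<in> {insv j vs v |vs v. vs \<in> evg \<mu> (g # gs) \<and> v \<in> evs \<mu> t}"
      then obtain u b v where z: "z = insv j (u # b) v" "u \<in> evs \<mu> g" "b \<in> evg \<mu> gs" "v \<in> evs \<mu> t"
        by auto
      have "insv (j - rks g) b v \<in> evg \<mu> (insg (j - rks g) gs t)" using IH z by auto
      then show "z \<in> evg \<mu> (insg j (g # gs) t)"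
        using False eq[OF z(2), of b v] z by auto
    qed
  qed
qed

fun nf :: "('a, 'n) mc \<Rightarrow> 'a it list" where
  "nf (NT A) = []"
| "nf (Var r i) = [IV r i (replicate r [IS])]"
| "nf (Word w) = [IW w]"
| "nf One = [IS]"
| "nf (Cat a b) = nf a @ nf b"
| "nf (Ins j a b) = inss j (nf a) (nf b)"

lemma rep_props: "wfg k (replicate n [IS])" "rkg (replicate n [IS]) = n"
  "evg \<mu> (replicate n [IS]) = {replicate n [Sep]}"
  by (induct n) auto

lemma nf_props:
  "nts C = {} \<Longrightarrow> wf_mc \<rho> C \<Longrightarrow> (\<forall>v\<in>vars C. fst v \<le> k) \<Longrightarrow> valuation \<mu> \<Longrightarrow>
    wfs k (nf C) \<and> rks (nf C) = rk \<rho> C \<and> evs \<mu> (nf C) = eval \<mu> C"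
proof (induct C)
  case (Var r i)
  have "evs \<mu> (nf (Var r i)) = \<mu> r i"
  proof (rule set_eqI, rule iffI)
    fix z assume "z \<in> evs \<mu> (nf (Var r i))"
    then obtain u where "z = fillo u (replicate r (Some [Sep]))" "u \<in> \<mu> r i"
      by (auto simp: rep_props)
    moreover then have "rk_word u = r" using Var(4) unfolding valuation_def by blast
    ultimately show "z \<in> \<mu> r i" using fillo_sep by metis
  next
    fix z assume z: "z \<in> \<mu> r i"
    then have "rk_word z = r" using Var(4) unfolding valuation_def by blast
    then have "z = fillo z (map Some (replicate r [Sep]))" using fillo_sep[of r z] by simp
    then show "z \<in> evs \<mu> (nf (Var r i))" using z by (auto simp: rep_props)
  qed
  then show ?case using Var rep_props by auto
next
  case (Cat a b)
  then show ?case by (auto simp: evs_append)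
next
  case (Ins j a b)
  then have ha: "wfs k (nf a)" "rks (nf a) = rk \<rho> a" "evs \<mu> (nf a) = eval \<mu> a"
    and hb: "wfs k (nf b)" "rks (nf b) = rk \<rho> b" "evs \<mu> (nf b) = eval \<mu> b"
    and j: "1 \<le> j" "j \<le> rk \<rho> a" by auto
  show ?case using ins_wf(2)[OF hb(1) ha(1)] ins_rk(2)[of j "nf a" "nf b"] ins_sem(2)[OF Ins(6) hb(1) ha(1), of j] ha hb j
    by auto
qed auto

definition wt :: "nat list \<Rightarrow> nat set \<Rightarrow> nat \<Rightarrow> nat" where
  "wt qs D h = (if h \<in> D then qs ! h else 1)"

fun fillseq :: "nat list \<Rightarrow> ('a, 'n) mc list \<Rightarrow> nat set \<Rightarrow> ('a, 'n) mc \<Rightarrow> nat list \<Rightarrow> ('a, 'n) mc" where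
  "fillseq qs cs D T [] = T"
| "fillseq qs cs D T (g # gs) = fillseq qs cs (insert g D) (Ins (Suc (\<Sum>h<g. wt qs D h)) T (cs ! g)) gs"

definition ost :: "nat \<Rightarrow> 'a sym list list \<Rightarrow> nat set \<Rightarrow> 'a sym list option list" where
  "ost r vs D = map (\<lambda>h. if h \<in> D then Some (vs ! h) else None) [0..<r]"

lemma sum_list_upt0: "sum_list (map F [0..<g]) = (\<Sum>h<g. F h)"
  by (induct g) auto

lemma cnt_take_ost:
  assumes "g \<le> r" "\<forall>h\<in>D. h < r \<longrightarrow> rk_word (vs ! h) = qs ! h"
  shows "cnt (take g (ost r vs D)) = (\<Sum>h<g. wt qs D h)"
proof -
  have "take g (ost r vs D) = map (\<lambda>h. if h \<in> D then Some (vs ! h) else None) [0..<g]"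
    using assms(1) by (simp add: ost_def take_map min_def)
  then have "cnt (take g (ost r vs D)) = (\<Sum>h<g. cw (if h \<in> D then Some (vs ! h) else None))"
    by (simp add: cnt_def sum_list_upt0 comp_def)
  also have "\<dots> = (\<Sum>h<g. wt qs D h)"
    using assms by (intro sum.cong) (auto simp: wt_def)
  finally show ?thesis .
qed

lemma step_eq:
  assumes "rk_word u = r" "length vs = r" "\<forall>h\<in>D. h < r \<longrightarrow> rk_word (vs ! h) = qs ! h" "g < r" "g \<notin> D"
  shows "intercal (Suc (\<Sum>h<g. wt qs D h)) (fillo u (ost r vs D)) v = fillo u (ost r (vs[g := v]) (insert g D))"
proof -
  have l: "length (ost r vs D) = rk_word u" using assms(1) by (simp add: ost_def)
  have "intercal (Suc (\<Sum>h<g. wt qs D h)) (fillo u (ost r vs D)) v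
      = fillo u (inso (Suc (cnt (take g (ost r vs D)))) (ost r vs D) v)"
    using intercal_fillo[OF l] cnt_take_ost[of g r D vs qs] assms by simp
  also have "inso (Suc (cnt (take g (ost r vs D)))) (ost r vs D) v = (ost r vs D)[g := Some v]"
    using assms by (intro inso_upd) (auto simp: ost_def)
  also have "(ost r vs D)[g := Some v] = ost r (vs[g := v]) (insert g D)"
    using assms by (auto simp: ost_def intro!: nth_equalityI simp: nth_list_update)
  finally show ?thesis .
qed

definition SD :: "(nat \<Rightarrow> nat \<Rightarrow> 'a sym list set) \<Rightarrow> nat \<Rightarrow> nat \<Rightarrow> ('a, 'n) mc list \<Rightarrow> nat set \<Rightarrow> 'a sym list set" where
  "SD \<mu> r i cs D = {fillo u (ost r vs D) | u vs. u \<in> \<mu> r i \<and> length vs = r \<and> (\<forall>h\<in>D. vs ! h \<in> eval \<mu> (cs ! h))}"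

lemma fillseq_sem:
  assumes "valuation \<mu>" "length qs = r" "\<forall>h<r. \<forall>w\<in>eval \<mu> (cs ! h). rk_word w = qs ! h"
  shows "distinct ord \<Longrightarrow> set ord \<subseteq> {..<r} \<Longrightarrow> set ord \<inter> D = {} \<Longrightarrow> D \<subseteq> {..<r} \<Longrightarrow>
    eval \<mu> T = SD \<mu> r i cs D \<Longrightarrow> eval \<mu> (fillseq qs cs D T ord) = SD \<mu> r i cs (D \<union> set ord)"
proof (induct ord arbitrary: D T)
  case Nil then show ?case by simp
next
  case (Cons g ord)
  let ?j = "Suc (\<Sum>h<g. wt qs D h)"
  have g: "g < r" "g \<notin> D" using Cons by auto
  have "eval \<mu> (Ins ?j T (cs ! g)) = SD \<mu> r i cs (insert g D)"
  proof (rule set_eqI, rule iffI)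
    fix z assume "z \<in> eval \<mu> (Ins ?j T (cs ! g))"
    then obtain w v where z: "z = intercal ?j w v" "w \<in> SD \<mu> r i cs D" "v \<in> eval \<mu> (cs ! g)"
      using Cons(6) by auto
    then obtain u vs where w: "w = fillo u (ost r vs D)" "u \<in> \<mu> r i" "length vs = r"
      "\<forall>h\<in>D. vs ! h \<in> eval \<mu> (cs ! h)" unfolding SD_def by blast
    have ru: "rk_word u = r" using assms(1) w(2) unfolding valuation_def by blast
    have rv: "\<forall>h\<in>D. h < r \<longrightarrow> rk_word (vs ! h) = qs ! h" using w(4) assms(3) by blast
    have "z = fillo u (ost r (vs[g := v]) (insert g D))"
      using step_eq[OF ru w(3) rv g] z w by simp
    moreover have "\<forall>h\<in>insert g D. vs[g := v] ! h \<in> eval \<mu> (cs ! h)"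
      using w(3,4) z(3) g by (auto simp: nth_list_update)
    ultimately show "z \<in> SD \<mu> r i cs (insert g D)" using w unfolding SD_def by fastforce
  next
    fix z assume "z \<in> SD \<mu> r i cs (insert g D)"
    then obtain u vs where w: "z = fillo u (ost r vs (insert g D))" "u \<in> \<mu> r i" "length vs = r"
      "\<forall>h\<in>insert g D. vs ! h \<in> eval \<mu> (cs ! h)" unfolding SD_def by blast
    have ru: "rk_word u = r" using assms(1) w(2) unfolding valuation_def by blast
    have rv: "\<forall>h\<in>D. h < r \<longrightarrow> rk_word (vs ! h) = qs ! h" using w(4) assms(3) by blast
    have "z = intercal ?j (fillo u (ost r vs D)) (vs ! g)"
      using step_eq[OF ru w(3) rv g, of "vs ! g"] w by simp
    moreover have "fillo u (ost r vs D) \<in> eval \<mu> T" using Cons(6) w unfolding SD_def by blast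
    moreover have "vs ! g \<in> eval \<mu> (cs ! g)" using w by blast
    ultimately show "z \<in> eval \<mu> (Ins ?j T (cs ! g))" by auto
  qed
  then have "eval \<mu> (fillseq qs cs (insert g D) (Ins ?j T (cs ! g)) ord) = SD \<mu> r i cs (insert g D \<union> set ord)"
    using Cons by (intro Cons(1)) auto
  then show ?case by simp
qed

lemma sum_le_upto: "g < r \<Longrightarrow> (\<Sum>h<g. f h) + f g \<le> (\<Sum>h<r. (f :: nat \<Rightarrow> nat) h)"
proof -
  assume "g < r"
  have "(\<Sum>h<g. f h) + f g = (\<Sum>h<Suc g. f h)" by simp
  also have "\<dots> \<le> (\<Sum>h<r. f h)" using \<open>g < r\<close> by (intro sum_mono2) auto
  finally show ?thesis .
qed

lemma wt_insert_sum:
  assumes "g < r" "g \<notin> D"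
  shows "(\<Sum>h<r. wt qs (insert g D) h) + 1 = (\<Sum>h<r. wt qs D h) + qs ! g"
proof -
  have f: "finite {..<r}" "g \<in> {..<r}" using assms by auto
  have e: "(\<Sum>h\<in>{..<r}-{g}. wt qs (insert g D) h) = (\<Sum>h\<in>{..<r}-{g}. wt qs D h)"
    by (intro sum.cong) (auto simp: wt_def)
  show ?thesis
    using sum.remove[OF f, of "wt qs (insert g D)"] sum.remove[OF f, of "wt qs D"] e assms(2)
    by (simp add: wt_def)
qed

lemma fillseq_wf:
  assumes "length qs = r"
    "\<forall>g\<in>set ord. wf_mc \<rho> (cs!g) \<and> rk \<rho> (cs!g) = qs!g \<and> nts (cs!g) = {} \<and> (\<forall>E\<in>subterms (cs!g). rk \<rho> E \<le> k)"
  shows "distinct ord \<Longrightarrow> set ord \<subseteq> {..<r} \<Longrightarrow> set ord \<inter> D = {} \<Longrightarrow> wf_mc \<rho> T \<Longrightarrow> nts T = {} \<Longrightarrow>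
    rk \<rho> T = (\<Sum>h<r. wt qs D h) \<Longrightarrow> (\<forall>E\<in>subterms T. rk \<rho> E \<le> k) \<Longrightarrow>
    (\<forall>n\<le>length ord. (\<Sum>h<r. wt qs (D \<union> set (take n ord)) h) \<le> k) \<Longrightarrow>
    wf_mc \<rho> (fillseq qs cs D T ord) \<and> nts (fillseq qs cs D T ord) = {}
    \<and> rk \<rho> (fillseq qs cs D T ord) = (\<Sum>h<r. wt qs (D \<union> set ord) h)
    \<and> (\<forall>E\<in>subterms (fillseq qs cs D T ord). rk \<rho> E \<le> k)"
  using assms(2)
proof (induct ord arbitrary: D T)
  case Nil then show ?case by simp
next
  case (Cons g ord)
  let ?j = "Suc (\<Sum>h<g. wt qs D h)"
  let ?T = "Ins ?j T (cs ! g)"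
  have g: "g < r" "g \<notin> D" using Cons by auto
  have wg: "wt qs D g = 1" using g by (simp add: wt_def)
  have c: "wf_mc \<rho> (cs!g)" "rk \<rho> (cs!g) = qs!g" "nts (cs!g) = {}" "\<forall>E\<in>subterms (cs!g). rk \<rho> E \<le> k"
    using Cons(10) by auto
  have jle: "?j \<le> rk \<rho> T" using sum_le_upto[OF g(1), of "wt qs D"] wg Cons(7) by simp
  have rkT: "rk \<rho> ?T = (\<Sum>h<r. wt qs (insert g D) h)"
    using wt_insert_sum[OF g, of qs] Cons(7) c(2) by simp
  have b1: "(\<Sum>h<r. wt qs (insert g D) h) \<le> k" using Cons(9)[rule_format, of 1] by simp
  have wfT: "wf_mc \<rho> ?T" using jle Cons(5) c(1) by simp
  have ntT: "nts ?T = {}" using Cons(6) c(3) by simp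
  have subT: "\<forall>E\<in>subterms ?T. rk \<rho> E \<le> k" using Cons(8) c(4) rkT b1 by auto
  have bnd: "\<forall>n\<le>length ord. (\<Sum>h<r. wt qs (insert g D \<union> set (take n ord)) h) \<le> k"
  proof (intro allI impI)
    fix n assume "n \<le> length ord"
    then have "(\<Sum>h<r. wt qs (D \<union> set (take (Suc n) (g # ord))) h) \<le> k" using Cons(9)[rule_format, of "Suc n"] by simp
    then show "(\<Sum>h<r. wt qs (insert g D \<union> set (take n ord)) h) \<le> k" by simp
  qed
  have "wf_mc \<rho> (fillseq qs cs (insert g D) ?T ord) \<and> nts (fillseq qs cs (insert g D) ?T ord) = {}
    \<and> rk \<rho> (fillseq qs cs (insert g D) ?T ord) = (\<Sum>h<r. wt qs (insert g D \<union> set ord) h)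
    \<and> (\<forall>E\<in>subterms (fillseq qs cs (insert g D) ?T ord). rk \<rho> E \<le> k)"
    using Cons(2-4) Cons(10) wfT ntT rkT subT bnd by (intro Cons(1)) auto
  then show ?case by simp
qed

definition ordg :: "nat list \<Rightarrow> nat \<Rightarrow> nat list" where
  "ordg qs r = filter (\<lambda>h. qs ! h = 0) [0..<r] @ filter (\<lambda>h. qs ! h \<noteq> 0) [0..<r]"

lemma ordg_props: "distinct (ordg qs r)" "set (ordg qs r) = {..<r}"
  by (auto simp: ordg_def)

lemma ordg_bound:
  "(\<Sum>h<r. wt qs (set (take n (ordg qs r))) h) \<le> max r (\<Sum>h<r. qs ! h)"
proof -
  let ?z = "filter (\<lambda>h. qs ! h = 0) [0..<r]" and ?p = "filter (\<lambda>h. qs ! h \<noteq> 0) [0..<r]"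
  show ?thesis
  proof (cases "n \<le> length ?z")
    case True
    then have "take n (ordg qs r) = take n ?z" by (simp add: ordg_def)
    then have "\<forall>h<r. wt qs (set (take n (ordg qs r))) h \<le> 1"
      by (auto simp: wt_def dest!: in_set_takeD)
    then have "(\<Sum>h<r. wt qs (set (take n (ordg qs r))) h) \<le> (\<Sum>h<r. 1)" by (intro sum_mono) auto
    then show ?thesis by simp
  next
    case False
    then have "take n (ordg qs r) = ?z @ take (n - length ?z) ?p" by (simp add: ordg_def)
    then have "\<forall>h<r. wt qs (set (take n (ordg qs r))) h \<le> qs ! h"
      by (auto simp: wt_def)
    then have "(\<Sum>h<r. wt qs (set (take n (ordg qs r))) h) \<le> (\<Sum>h<r. qs ! h)" by (intro sum_mono) auto
    then show ?thesis by simp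
  qed
qed

definition mkIV :: "nat \<Rightarrow> nat \<Rightarrow> nat list \<Rightarrow> ('a, 'n) mc list \<Rightarrow> ('a, 'n) mc" where
  "mkIV r i qs cs = fillseq qs cs {} (Var r i) (ordg qs r)"

lemma mkIV_sem:
  assumes "valuation \<mu>" "length qs = r" "\<forall>h<r. \<forall>w\<in>eval \<mu> (cs ! h). rk_word w = qs ! h"
  shows "eval \<mu> (mkIV r i qs cs) = {fillo u (map Some vs) | u vs. u \<in> \<mu> r i \<and> length vs = r \<and> (\<forall>h<r. vs ! h \<in> eval \<mu> (cs ! h))}"
proof -
  have o0: "\<And>vs. ost r vs {} = replicate r None" by (simp add: ost_def map_replicate_const)
  have "eval \<mu> (Var r i :: ('a, 'n) mc) = SD \<mu> r i cs {}"
  proof (rule set_eqI, rule iffI)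
    fix z assume z: "z \<in> eval \<mu> (Var r i :: ('a, 'n) mc)"
    then have "rk_word z = r" using assms(1) unfolding valuation_def by auto
    then have "z = fillo z (ost r (replicate r []) {})" using o0 fillo_none by metis
    then show "z \<in> SD \<mu> r i cs {}" using z unfolding SD_def by fastforce
  next
    fix z assume "z \<in> SD \<mu> r i cs {}"
    then obtain u vs where "z = fillo u (ost r vs {})" "u \<in> \<mu> r i" unfolding SD_def by blast
    moreover then have "rk_word u = r" using assms(1) unfolding valuation_def by auto
    ultimately show "z \<in> eval \<mu> (Var r i :: ('a, 'n) mc)" using o0 fillo_none by (metis eval.simps(2))
  qed
  then have "eval \<mu> (mkIV r i qs cs) = SD \<mu> r i cs ({} \<union> set (ordg qs r))"
    unfolding mkIV_def using ordg_props[of qs r] by (intro fillseq_sem[OF assms]) auto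
  also have "\<dots> = SD \<mu> r i cs {..<r}" using ordg_props[of qs r] by simp
  also have "\<dots> = {fillo u (map Some vs) | u vs. u \<in> \<mu> r i \<and> length vs = r \<and> (\<forall>h<r. vs ! h \<in> eval \<mu> (cs ! h))}"
  proof -
    have *: "\<And>vs. length vs = r \<Longrightarrow> ost r vs {..<r} = map Some vs"
      by (auto simp: ost_def intro!: nth_equalityI)
    show ?thesis
    proof (rule set_eqI, rule iffI)
      fix z assume "z \<in> SD \<mu> r i cs {..<r}"
      then obtain u vs where uv: "z = fillo u (ost r vs {..<r})" "u \<in> \<mu> r i" "length vs = r"
        "\<forall>h<r. vs ! h \<in> eval \<mu> (cs ! h)" unfolding SD_def by auto
      then have "z = fillo u (map Some vs)" using *[OF uv(3)] by simp
      then show "z \<in> {fillo u (map Some vs) | u vs. u \<in> \<mu> r i \<and> length vs = r \<and> (\<forall>h<r. vs ! h \<in> eval \<mu> (cs ! h))}"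
        using uv by blast
    next
      fix z assume "z \<in> {fillo u (map Some vs) | u vs. u \<in> \<mu> r i \<and> length vs = r \<and> (\<forall>h<r. vs ! h \<in> eval \<mu> (cs ! h))}"
      then obtain u vs where uv: "z = fillo u (map Some vs)" "u \<in> \<mu> r i" "length vs = r"
        "\<forall>h<r. vs ! h \<in> eval \<mu> (cs ! h)" by auto
      then have "z = fillo u (ost r vs {..<r})" using *[OF uv(3)] by simp
      moreover have "\<forall>h\<in>{..<r}. vs ! h \<in> eval \<mu> (cs ! h)" using uv by simp
      ultimately show "z \<in> SD \<mu> r i cs {..<r}" unfolding SD_def using uv by blast
    qed
  qed
  finally show ?thesis .
qed

lemma mkIV_wf:
  assumes "length qs = r"
    "\<forall>g<r. wf_mc \<rho> (cs!g) \<and> rk \<rho> (cs!g) = qs!g \<and> nts (cs!g) = {} \<and> (\<forall>E\<in>subterms (cs!g). rk \<rho> E \<le> k)"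
    "r \<le> k" "(\<Sum>h<r. qs ! h) \<le> k"
  shows "wf_mc \<rho> (mkIV r i qs cs) \<and> nts (mkIV r i qs cs) = {} \<and> rk \<rho> (mkIV r i qs cs) = (\<Sum>h<r. qs ! h)
    \<and> (\<forall>E\<in>subterms (mkIV r i qs cs). rk \<rho> E \<le> k)"
proof -
  have w0: "(\<Sum>h<r. wt qs {} h) = r" by (simp add: wt_def)
  have wr: "(\<Sum>h<r. wt qs ({} \<union> set (ordg qs r)) h) = (\<Sum>h<r. qs ! h)"
    using ordg_props[of qs r] by (intro sum.cong) (auto simp: wt_def)
  have bnd: "\<forall>n\<le>length (ordg qs r). (\<Sum>h<r. wt qs ({} \<union> set (take n (ordg qs r))) h) \<le> k"
  proof (intro allI impI)
    fix n
    have "(\<Sum>h<r. wt qs (set (take n (ordg qs r))) h) \<le> max r (\<Sum>h<r. qs ! h)" by (rule ordg_bound)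
    then show "(\<Sum>h<r. wt qs ({} \<union> set (take n (ordg qs r))) h) \<le> k" using assms(3,4) by simp
  qed
  have "wf_mc \<rho> (fillseq qs cs {} (Var r i) (ordg qs r)) \<and> nts (fillseq qs cs {} (Var r i) (ordg qs r)) = {}
    \<and> rk \<rho> (fillseq qs cs {} (Var r i) (ordg qs r)) = (\<Sum>h<r. wt qs ({} \<union> set (ordg qs r)) h)
    \<and> (\<forall>E\<in>subterms (fillseq qs cs {} (Var r i) (ordg qs r)). rk \<rho> E \<le> k)"
  proof -
    have c: "\<forall>g\<in>set (ordg qs r). wf_mc \<rho> (cs!g) \<and> rk \<rho> (cs!g) = qs!g \<and> nts (cs!g) = {} \<and> (\<forall>E\<in>subterms (cs!g). rk \<rho> E \<le> k)"
      using assms(2) ordg_props(2)[of qs r] by blast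
    show ?thesis
      by (rule fillseq_wf[OF assms(1) c ordg_props(1)]) (use ordg_props(2)[of qs r] w0 bnd assms(3) in auto)
  qed
  then show ?thesis using wr unfolding mkIV_def by simp
qed

lemma fillseq_wf0:
  assumes "length qs = r"
    "\<forall>g\<in>set ord. wf_mc \<rho> (cs!g) \<and> rk \<rho> (cs!g) = qs!g \<and> nts (cs!g) = {}"
  shows "distinct ord \<Longrightarrow> set ord \<subseteq> {..<r} \<Longrightarrow> set ord \<inter> D = {} \<Longrightarrow> wf_mc \<rho> T \<Longrightarrow> nts T = {} \<Longrightarrow>
    rk \<rho> T = (\<Sum>h<r. wt qs D h) \<Longrightarrow>
    wf_mc \<rho> (fillseq qs cs D T ord) \<and> nts (fillseq qs cs D T ord) = {}
    \<and> rk \<rho> (fillseq qs cs D T ord) = (\<Sum>h<r. wt qs (D \<union> set ord) h)"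
  using assms(2)
proof (induct ord arbitrary: D T)
  case Nil then show ?case by simp
next
  case (Cons g ord)
  let ?j = "Suc (\<Sum>h<g. wt qs D h)"
  let ?T = "Ins ?j T (cs ! g)"
  have g: "g < r" "g \<notin> D" using Cons by auto
  have wg: "wt qs D g = 1" using g by (simp add: wt_def)
  have c: "wf_mc \<rho> (cs!g)" "rk \<rho> (cs!g) = qs!g" "nts (cs!g) = {}"
    using Cons(8) by auto
  have jle: "?j \<le> rk \<rho> T" using sum_le_upto[OF g(1), of "wt qs D"] wg Cons(7) by simp
  have rkT: "rk \<rho> ?T = (\<Sum>h<r. wt qs (insert g D) h)"
    using wt_insert_sum[OF g, of qs] Cons(7) c(2) by simp
  have wfT: "wf_mc \<rho> ?T" using jle Cons(5) c(1) by simp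
  have ntT: "nts ?T = {}" using Cons(6) c(3) by simp
  have "wf_mc \<rho> (fillseq qs cs (insert g D) ?T ord) \<and> nts (fillseq qs cs (insert g D) ?T ord) = {}
    \<and> rk \<rho> (fillseq qs cs (insert g D) ?T ord) = (\<Sum>h<r. wt qs (insert g D \<union> set ord) h)"
    using Cons(2-4) Cons(8) wfT ntT rkT by (intro Cons(1)) auto
  then show ?case by simp
qed

lemma mkIV_wf0:
  assumes "length qs = r"
    "\<forall>g<r. wf_mc \<rho> (cs!g) \<and> rk \<rho> (cs!g) = qs!g \<and> nts (cs!g) = {}"
  shows "wf_mc \<rho> (mkIV r i qs cs) \<and> nts (mkIV r i qs cs) = {} \<and> rk \<rho> (mkIV r i qs cs) = (\<Sum>h<r. qs ! h)"
proof -
  have w0: "(\<Sum>h<r. wt qs {} h) = r" by (simp add: wt_def)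
  have wr: "(\<Sum>h<r. wt qs ({} \<union> set (ordg qs r)) h) = (\<Sum>h<r. qs ! h)"
    using ordg_props[of qs r] by (intro sum.cong) (auto simp: wt_def)
  have c: "\<forall>g\<in>set (ordg qs r). wf_mc \<rho> (cs!g) \<and> rk \<rho> (cs!g) = qs!g \<and> nts (cs!g) = {}"
    using assms(2) ordg_props(2)[of qs r] by blast
  have "wf_mc \<rho> (fillseq qs cs {} (Var r i) (ordg qs r)) \<and> nts (fillseq qs cs {} (Var r i) (ordg qs r)) = {}
    \<and> rk \<rho> (fillseq qs cs {} (Var r i) (ordg qs r)) = (\<Sum>h<r. wt qs ({} \<union> set (ordg qs r)) h)"
    by (rule fillseq_wf0[OF assms(1) c ordg_props(1)]) (use ordg_props(2)[of qs r] w0 in auto)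
  then show ?thesis using wr unfolding mkIV_def by simp
qed

primrec bi :: "'a it \<Rightarrow> ('a, 'n) mc" and bs :: "'a it list \<Rightarrow> ('a, 'n) mc"
  and bg :: "'a it list list \<Rightarrow> ('a, 'n) mc list" where
  "bi (IW w) = Word w" | "bi IS = One" | "bi (IV r i gs) = mkIV r i (map rks gs) (bg gs)"
| "bs [] = Word []" | "bs (x#s) = Cat (bi x) (bs s)"
| "bg [] = []" | "bg (s#gs) = bs s # bg gs"

lemma bg_map: "bg gs = map bs gs" by (induct gs) auto

lemma rkg_sum: "rkg gs = (\<Sum>h<length gs. rks (gs ! h))"
proof -
  have "rkg gs = sum_list (map rks gs)" by (induct gs) auto
  then show ?thesis by (simp add: sum_list_sum_nth atLeast0LessThan)
qed

lemma wfg_nth: "wfg k gs \<Longrightarrow> h < length gs \<Longrightarrow> wfs k (gs ! h)"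
  by (induct gs arbitrary: h) (auto simp: nth_Cons split: nat.splits)

definition PI :: "('n \<Rightarrow> nat) \<Rightarrow> nat \<Rightarrow> (nat \<Rightarrow> nat \<Rightarrow> 'a sym list set) \<Rightarrow> 'a it \<Rightarrow> bool" where
  "PI \<rho> k \<mu> x \<longleftrightarrow> (wfi k x \<longrightarrow> wf_mc \<rho> (bi x :: ('a, 'n) mc) \<and> nts (bi x :: ('a, 'n) mc) = {}
     \<and> rk \<rho> (bi x :: ('a, 'n) mc) = rki x \<and> (valuation \<mu> \<longrightarrow> eval \<mu> (bi x :: ('a, 'n) mc) = evi \<mu> x)
     \<and> (rki x \<le> k \<longrightarrow> 1 \<le> k \<longrightarrow> (\<forall>E\<in>subterms (bi x :: ('a, 'n) mc). rk \<rho> E \<le> k)))"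

definition QS :: "('n \<Rightarrow> nat) \<Rightarrow> nat \<Rightarrow> (nat \<Rightarrow> nat \<Rightarrow> 'a sym list set) \<Rightarrow> 'a it list \<Rightarrow> bool" where
  "QS \<rho> k \<mu> s \<longleftrightarrow> (wfs k s \<longrightarrow> wf_mc \<rho> (bs s :: ('a, 'n) mc) \<and> nts (bs s :: ('a, 'n) mc) = {}
     \<and> rk \<rho> (bs s :: ('a, 'n) mc) = rks s \<and> (valuation \<mu> \<longrightarrow> eval \<mu> (bs s :: ('a, 'n) mc) = evs \<mu> s)
     \<and> (rks s \<le> k \<longrightarrow> 1 \<le> k \<longrightarrow> (\<forall>E\<in>subterms (bs s :: ('a, 'n) mc). rk \<rho> E \<le> k)))"

lemma QS_from_PI:
  fixes \<rho> :: "'n \<Rightarrow> nat" and s :: "'a it list"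
  shows "(\<forall>y\<in>set s. PI \<rho> k \<mu> y) \<Longrightarrow> QS \<rho> k \<mu> s"
proof (induct s)
  case Nil then show ?case by (simp add: QS_def)
next
  case (Cons x s)
  then have px: "PI \<rho> k \<mu> x" and qs: "QS \<rho> k \<mu> s" by auto
  show ?case unfolding QS_def
  proof (intro impI)
    assume w: "wfs k (x # s)"
    then have a: "wf_mc \<rho> (bi x :: ('a, 'n) mc) \<and> nts (bi x :: ('a, 'n) mc) = {}
     \<and> rk \<rho> (bi x :: ('a, 'n) mc) = rki x \<and> (valuation \<mu> \<longrightarrow> eval \<mu> (bi x :: ('a, 'n) mc) = evi \<mu> x)
     \<and> (rki x \<le> k \<longrightarrow> 1 \<le> k \<longrightarrow> (\<forall>E\<in>subterms (bi x :: ('a, 'n) mc). rk \<rho> E \<le> k))"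
      using px unfolding PI_def by simp
    from w have b: "wf_mc \<rho> (bs s :: ('a, 'n) mc) \<and> nts (bs s :: ('a, 'n) mc) = {}
     \<and> rk \<rho> (bs s :: ('a, 'n) mc) = rks s \<and> (valuation \<mu> \<longrightarrow> eval \<mu> (bs s :: ('a, 'n) mc) = evs \<mu> s)
     \<and> (rks s \<le> k \<longrightarrow> 1 \<le> k \<longrightarrow> (\<forall>E\<in>subterms (bs s :: ('a, 'n) mc). rk \<rho> E \<le> k))"
      using qs unfolding QS_def by simp
    show "wf_mc \<rho> (bs (x # s) :: ('a, 'n) mc) \<and> nts (bs (x # s) :: ('a, 'n) mc) = {}
     \<and> rk \<rho> (bs (x # s) :: ('a, 'n) mc) = rks (x # s) \<and> (valuation \<mu> \<longrightarrow> eval \<mu> (bs (x # s) :: ('a, 'n) mc) = evs \<mu> (x # s))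
     \<and> (rks (x # s) \<le> k \<longrightarrow> 1 \<le> k \<longrightarrow> (\<forall>E\<in>subterms (bs (x # s) :: ('a, 'n) mc). rk \<rho> E \<le> k))"
      using a b by auto
  qed
qed

lemma PI_all:
  fixes \<rho> :: "'n \<Rightarrow> nat" and x :: "'a it"
  shows "PI \<rho> k \<mu> x"
proof (induct x)
  case (IW w) then show ?case by (simp add: PI_def)
next
  case IS then show ?case by (simp add: PI_def)
next
  case (IV r i gs)
  have Q: "\<And>g. g \<in> set gs \<Longrightarrow> QS \<rho> k \<mu> g" using IV by (intro QS_from_PI) blast
  show ?case unfolding PI_def
  proof (intro impI)
    assume w: "wfi k (IV r i gs)"
    then have lr: "length gs = r" and rk_: "r \<le> k" and wg: "wfg k gs" by auto
    let ?qs = "map rks gs" and ?cs = "bg gs :: ('a, 'n) mc list"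
    have Qh: "\<And>h. h < r \<Longrightarrow> wf_mc \<rho> (?cs ! h) \<and> nts (?cs ! h) = {} \<and> rk \<rho> (?cs ! h) = ?qs ! h
       \<and> (valuation \<mu> \<longrightarrow> eval \<mu> (?cs ! h) = evs \<mu> (gs ! h))
       \<and> (rks (gs ! h) \<le> k \<longrightarrow> 1 \<le> k \<longrightarrow> (\<forall>E\<in>subterms (?cs ! h). rk \<rho> E \<le> k))"
    proof -
      fix h assume h: "h < r"
      then have "QS \<rho> k \<mu> (gs ! h)" using Q lr by auto
      moreover have "wfs k (gs ! h)" using wfg_nth[OF wg] h lr by simp
      ultimately show "?thesis h" using h lr unfolding QS_def by (simp add: bg_map)
    qed
    have sumq: "(\<Sum>h<r. ?qs ! h) = rkg gs" using rkg_sum[of gs] lr by simp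
    have le: "\<And>h. h < r \<Longrightarrow> rks (gs ! h) \<le> rkg gs"
    proof -
      fix h assume "h < r"
      then have "(\<Sum>h\<in>{h}. rks (gs ! h)) \<le> (\<Sum>h<r. rks (gs ! h))" by (intro sum_mono2) auto
      then show "rks (gs ! h) \<le> rkg gs" using rkg_sum[of gs] lr by simp
    qed
    have part1: "wf_mc \<rho> (bi (IV r i gs) :: ('a, 'n) mc) \<and> nts (bi (IV r i gs) :: ('a, 'n) mc) = {}
      \<and> rk \<rho> (bi (IV r i gs) :: ('a, 'n) mc) = rki (IV r i gs)
      \<and> (rki (IV r i gs) \<le> k \<longrightarrow> 1 \<le> k \<longrightarrow> (\<forall>E\<in>subterms (bi (IV r i gs) :: ('a, 'n) mc). rk \<rho> E \<le> k))"
    proof (cases "rkg gs \<le> k \<and> 1 \<le> k")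
      case True
      have "wf_mc \<rho> (mkIV r i ?qs ?cs) \<and> nts (mkIV r i ?qs ?cs) = {} \<and> rk \<rho> (mkIV r i ?qs ?cs) = (\<Sum>h<r. ?qs ! h)
        \<and> (\<forall>E\<in>subterms (mkIV r i ?qs ?cs). rk \<rho> E \<le> k)"
        using True lr rk_ sumq le Qh by (intro mkIV_wf) (auto intro: le_trans)
      then show ?thesis using sumq by simp
    next
      case False
      have "wf_mc \<rho> (mkIV r i ?qs ?cs) \<and> nts (mkIV r i ?qs ?cs) = {} \<and> rk \<rho> (mkIV r i ?qs ?cs) = (\<Sum>h<r. ?qs ! h)"
        using lr Qh by (intro mkIV_wf0) auto
      then show ?thesis using sumq False by simp
    qed
    have part2: "valuation \<mu> \<longrightarrow> eval \<mu> (bi (IV r i gs) :: ('a, 'n) mc) = evi \<mu> (IV r i gs)"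
    proof
      assume v: "valuation \<mu>"
      have rkc: "\<forall>h<r. \<forall>w\<in>eval \<mu> (?cs ! h). rk_word w = ?qs ! h"
      proof (intro allI impI ballI)
        fix h w assume h: "h < r" and w: "w \<in> eval \<mu> (?cs ! h)"
        then have "w \<in> evs \<mu> (gs ! h)" using Qh[OF h] v by simp
        then show "rk_word w = ?qs ! h" using rk_evs[OF v wfg_nth[OF wg], of h w] h lr by simp
      qed
      have "eval \<mu> (mkIV r i ?qs ?cs) = {fillo u (map Some vs) | u vs. u \<in> \<mu> r i \<and> length vs = r \<and> (\<forall>h<r. vs ! h \<in> eval \<mu> (?cs ! h))}"
        using mkIV_sem[OF v _ rkc, of i] lr by simp
      also have "\<dots> = evi \<mu> (IV r i gs)"
        using Qh v lr by (simp add: evg_char)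
      finally show "eval \<mu> (bi (IV r i gs) :: ('a, 'n) mc) = evi \<mu> (IV r i gs)" by simp
    qed
    show "wf_mc \<rho> (bi (IV r i gs) :: ('a, 'n) mc) \<and> nts (bi (IV r i gs) :: ('a, 'n) mc) = {}
      \<and> rk \<rho> (bi (IV r i gs) :: ('a, 'n) mc) = rki (IV r i gs)
      \<and> (valuation \<mu> \<longrightarrow> eval \<mu> (bi (IV r i gs) :: ('a, 'n) mc) = evi \<mu> (IV r i gs))
      \<and> (rki (IV r i gs) \<le> k \<longrightarrow> 1 \<le> k \<longrightarrow> (\<forall>E\<in>subterms (bi (IV r i gs) :: ('a, 'n) mc). rk \<rho> E \<le> k))"
      using part1 part2 by blast
  qed
qed

fun unNT :: "('n \<Rightarrow> nat) \<Rightarrow> ('n \<Rightarrow> nat) \<Rightarrow> nat \<Rightarrow> ('a, 'n) mc \<Rightarrow> ('a, 'n) mc" where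
  "unNT \<rho> f N (NT A) = Var (\<rho> A) (N + f A)"
| "unNT \<rho> f N (Cat a b) = Cat (unNT \<rho> f N a) (unNT \<rho> f N b)"
| "unNT \<rho> f N (Ins j a b) = Ins j (unNT \<rho> f N a) (unNT \<rho> f N b)"
| "unNT \<rho> f N c = c"

lemma unNT_props: "nts (unNT \<rho> f N C) = {} \<and> rk \<rho> (unNT \<rho> f N C) = rk \<rho> C \<and> (wf_mc \<rho> (unNT \<rho> f N C) = wf_mc \<rho> C)
   \<and> vars (unNT \<rho> f N C) \<subseteq> vars C \<union> (\<lambda>A. (\<rho> A, N + f A)) ` nts C"
  by (induct C) auto

lemma finite_nts: "finite (nts C)" by (induct C) auto
lemma finite_vars: "finite (vars C)" by (induct C) auto

lemma subst_unNT:
  assumes "inj_on f S" "\<And>v. \<sigma> v = (if N \<le> snd v \<and> (\<exists>A\<in>S. f A = snd v - N \<and> \<rho> A = fst v)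
      then Some (THE A. A \<in> S \<and> f A = snd v - N) else None)"
  shows "nts C \<subseteq> S \<Longrightarrow> (\<forall>v\<in>vars C. snd v < N) \<Longrightarrow> subst \<sigma> (unNT \<rho> f N C) = C"
proof (induct C)
  case (NT A)
  then have A: "A \<in> S" by simp
  have "(THE B. B \<in> S \<and> f B = f A) = A" using A assms(1) by (auto dest: inj_onD)
  then show ?case using A assms(2)[of "(\<rho> A, N + f A)"] by auto
next
  case (Var r i)
  then show ?case using assms(2)[of "(r, i)"] by auto
qed auto

lemma rk_subst:
  assumes "\<forall>v A. \<sigma> v = Some A \<longrightarrow> \<rho> A = fst v"
  shows "rk \<rho> (subst \<sigma> T) = rk \<rho> T"
proof (induct T)
  case (Var r i)
  then show ?case using assms by (cases "\<sigma> (r, i)") auto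
qed simp_all

lemma wf_subst:
  assumes "\<forall>v A. \<sigma> v = Some A \<longrightarrow> \<rho> A = fst v"
  shows "wf_mc \<rho> (subst \<sigma> T) = wf_mc \<rho> T"
proof (induct T)
  case (Var r i)
  then show ?case by (cases "\<sigma> (r, i)") auto
qed (simp_all add: rk_subst[OF assms])

lemma subterms_subst: "subterms (subst \<sigma> T) = subst \<sigma> ` subterms T"
proof (induct T)
  case (Var r i)
  then show ?case by (cases "\<sigma> (r, i)") auto
qed (simp_all add: image_Un)

lemma subst_props:
  assumes "\<forall>v A. \<sigma> v = Some A \<longrightarrow> \<rho> A = fst v"
  shows "rk \<rho> (subst \<sigma> T) = rk \<rho> T \<and> wf_mc \<rho> (subst \<sigma> T) = wf_mc \<rho> T
    \<and> ((\<forall>E\<in>subterms T. rk \<rho> E \<le> k) \<longrightarrow> (\<forall>E\<in>subterms (subst \<sigma> T). rk \<rho> E \<le> k))"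
  using rk_subst[OF assms] wf_subst[OF assms] subterms_subst[of \<sigma> T] by auto

theorem lemma2:
  fixes \<rho> :: "'n \<Rightarrow> nat" and k :: nat and C :: "('a::finite, 'n) mc"
  assumes "k_essential \<rho> k C"
  shows "\<exists>C'. k_correct \<rho> k C' \<and> mc_equiv \<rho> C C'"
proof -
  from assms have wC: "wf_mc \<rho> C" and rC: "rk \<rho> C < k" and vC: "\<forall>v\<in>vars C. fst v < k"
    and nC: "\<forall>A\<in>nts C. \<rho> A < k" unfolding k_essential_def by auto
  have "\<exists>f :: 'n \<Rightarrow> nat. inj_on f (nts C)"
    using finite_imp_inj_to_nat_seg[OF finite_nts[of C]] by (elim exE conjE) (rule exI)
  then obtain f :: "'n \<Rightarrow> nat" where f2: "inj_on f (nts C)" by (elim exE)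
  define N where "N = Suc (Max (insert 0 (snd ` vars C)))"
  have vN: "\<forall>v\<in>vars C. snd v < N"
    using finite_vars[of C] unfolding N_def by (auto simp: le_imp_less_Suc)
  define \<sigma> :: "nat \<times> nat \<Rightarrow> 'n option" where "\<sigma> v = (if N \<le> snd v \<and> (\<exists>A\<in>nts C. f A = snd v - N \<and> \<rho> A = fst v)
      then Some (THE A. A \<in> nts C \<and> f A = snd v - N) else None)" for v
  have compat: "\<forall>v A. \<sigma> v = Some A \<longrightarrow> \<rho> A = fst v"
  proof (intro allI impI)
    fix v A assume "\<sigma> v = Some A"
    then obtain B where B: "B \<in> nts C" "f B = snd v - N" "\<rho> B = fst v" "A = (THE A. A \<in> nts C \<and> f A = snd v - N)"
      unfolding \<sigma>_def by (auto split: if_splits)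
    have "(THE A. A \<in> nts C \<and> f A = snd v - N) = B"
      using B(1,2) f2 by (intro the_equality) (auto simp: inj_on_def)
    then have "A = B" using B(4) by simp
    then show "\<rho> A = fst v" using B by simp
  qed
  define D1 where "D1 = unNT \<rho> f N C"
  have D1C: "subst \<sigma> D1 = C" unfolding D1_def
    by (rule subst_unNT[OF f2]) (use vN in \<open>auto simp: \<sigma>_def\<close>)
  have D1p: "nts D1 = {}" "rk \<rho> D1 = rk \<rho> C" "wf_mc \<rho> D1" "\<forall>v\<in>vars D1. fst v \<le> k"
  proof -
    have u: "nts (unNT \<rho> f N C) = {} \<and> rk \<rho> (unNT \<rho> f N C) = rk \<rho> C \<and> (wf_mc \<rho> (unNT \<rho> f N C) = wf_mc \<rho> C)
      \<and> vars (unNT \<rho> f N C) \<subseteq> vars C \<union> (\<lambda>A. (\<rho> A, N + f A)) ` nts C" by (rule unNT_props)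
    have "\<forall>v\<in>vars C \<union> (\<lambda>A. (\<rho> A, N + f A)) ` nts C. fst v \<le> k" using vC nC by (auto simp: less_imp_le)
    then show "nts D1 = {}" "rk \<rho> D1 = rk \<rho> C" "wf_mc \<rho> D1" "\<forall>v\<in>vars D1. fst v \<le> k"
      using u wC unfolding D1_def by blast+
  qed
  define s where "s = nf D1"
  have k1: "1 \<le> k" using rC by simp
  define D2 :: "('a, 'n) mc" where "D2 = bs s"
  have nfp: "\<And>\<mu>. valuation \<mu> \<Longrightarrow> wfs k s \<and> rks s = rk \<rho> D1 \<and> evs \<mu> s = eval \<mu> D1"
    unfolding s_def using nf_props[OF D1p(1) D1p(3) D1p(4)] by blast
  have ws: "wfs k s" and rs: "rks s = rk \<rho> D1"
    using nfp[of "\<lambda>_ _. {}"] by (auto simp: valuation_def)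
  have Q: "\<And>\<mu>. QS \<rho> k \<mu> s" using PI_all by (intro QS_from_PI) blast
  have D2p: "wf_mc \<rho> D2" "nts D2 = {}" "rk \<rho> D2 = rks s" "\<forall>E\<in>subterms D2. rk \<rho> E \<le> k"
    using Q[of "\<lambda>_ _. {}"] ws rs D1p(2) rC k1 unfolding QS_def D2_def by auto
  have ev: "\<And>\<mu>. valuation \<mu> \<Longrightarrow> eval \<mu> D1 = eval \<mu> D2"
  proof -
    fix \<mu> :: "nat \<Rightarrow> nat \<Rightarrow> 'a sym list set" assume v: "valuation \<mu>"
    have "eval \<mu> D2 = evs \<mu> s" using Q[of \<mu>] ws v unfolding QS_def D2_def by auto
    then show "eval \<mu> D1 = eval \<mu> D2" using nfp[OF v] by simp
  qed
  have ge: "ground_equiv \<rho> D1 D2"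
    unfolding ground_equiv_def ground_def using D1p D2p ev by auto
  define C' where "C' = subst \<sigma> D2"
  have "k_correct \<rho> k C'"
    using subst_props[OF compat, of D2 k] D2p unfolding k_correct_def C'_def by auto
  moreover have "mc_equiv \<rho> C C'"
    unfolding mc_equiv_def using compat ge D1C C'_def by blast
  ultimately show ?thesis by blast
qed

end
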